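(* Let $G$ be a finite EPPO group. Then $\mathcal{S}(G)$ is cyclically separable if and only if either $pq$ divides $|G|$ for some primes $p > q \geq 5$, or at least two of the following three conditions hold: (i) $p$ divides $|G|$ for some prime $p \geq 5$; (ii) $3$ divides $|G|$ and $G$ has a Sylow $3$-subgroup which is not of order $3$ or is not normal in $G$; (iii) $2$ divides $|G|$ and $G$ has a Sylow $2$-subgroup which is not of order $2$ or is not normal in $G$.
   Context: A finite group is an EPPO group if every element has prime power order. All graphs are simple and undirected. For a finite group $G$, the order supergraph $\mathcal{S}(G)$ is the graph with vertex set $G$ in which two distinct vertices $x,y$ are adjacent if and only if the order of $x$ divides the order of $y$ or the order of $y$ divides the order of $x$. For a graph $\Gamma$, a vertex cutset is a set $S$ of vertices such that $\Gamma - S$ is disconnected; a cyclic vertex cutset is a vertex cutset $S$ such that $\Gamma - S$ has at least two connected components each of which contains a cycle. $\Gamma$ is called cyclically separable if it has a cyclic vertex cutset. *)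

theory Defs
  imports "HOL-Algebra.Algebra" "HOL-Computational_Algebra.Primes"
begin

definition EPPO :: "('a, 'b) monoid_scheme \<Rightarrow> bool" where
  "EPPO G \<longleftrightarrow> group G \<and> finite (carrier G) \<and>
     (\<forall>x\<in>carrier G. \<exists>p k. Factorial_Ring.prime (p::nat) \<and> group.ord G x = p ^ k)"

definition sylow_subgroup :: "('a, 'b) monoid_scheme \<Rightarrow> nat \<Rightarrow> 'a set \<Rightarrow> bool" where
  "sylow_subgroup G p P \<longleftrightarrow> subgroup P G \<and> card P = p ^ multiplicity p (order G)"

definition order_supergraph_adj :: "('a, 'b) monoid_scheme \<Rightarrow> 'a \<Rightarrow> 'a \<Rightarrow> bool" where
  "order_supergraph_adj G x y \<longleftrightarrow> x \<in> carrier G \<and> y \<in> carrier G \<and> x \<noteq> y \<and>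
     (group.ord G x dvd group.ord G y \<or> group.ord G y dvd group.ord G x)"

definition induced_adj :: "'a set \<Rightarrow> ('a \<Rightarrow> 'a \<Rightarrow> bool) \<Rightarrow> 'a \<Rightarrow> 'a \<Rightarrow> bool" where
  "induced_adj W E x y \<longleftrightarrow> x \<in> W \<and> y \<in> W \<and> E x y"

definition is_component :: "'a set \<Rightarrow> ('a \<Rightarrow> 'a \<Rightarrow> bool) \<Rightarrow> 'a set \<Rightarrow> bool" where
  "is_component W E C \<longleftrightarrow> (\<exists>u\<in>W. C = {v. (induced_adj W E)\<^sup>*\<^sup>* u v})"

definition has_cycle_in :: "'a set \<Rightarrow> ('a \<Rightarrow> 'a \<Rightarrow> bool) \<Rightarrow> bool" where
  "has_cycle_in C E \<longleftrightarrow> (\<exists>xs. length xs \<ge> 3 \<and> distinct xs \<and> set xs \<subseteq> C \<and>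
     (\<forall>i < length xs. E (xs ! i) (xs ! ((i + 1) mod length xs))))"

definition vertex_cutset :: "'a set \<Rightarrow> ('a \<Rightarrow> 'a \<Rightarrow> bool) \<Rightarrow> 'a set \<Rightarrow> bool" where
  "vertex_cutset V E S \<longleftrightarrow> S \<subseteq> V \<and>
     (\<exists>C1 C2. is_component (V - S) E C1 \<and> is_component (V - S) E C2 \<and> C1 \<noteq> C2)"

definition cyclic_vertex_cutset :: "'a set \<Rightarrow> ('a \<Rightarrow> 'a \<Rightarrow> bool) \<Rightarrow> 'a set \<Rightarrow> bool" where
  "cyclic_vertex_cutset V E S \<longleftrightarrow> vertex_cutset V E S \<and>
     (\<exists>C1 C2. is_component (V - S) E C1 \<and> is_component (V - S) E C2 \<and> C1 \<noteq> C2 \<and>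
        has_cycle_in C1 E \<and> has_cycle_in C2 E)"

definition cyclically_separable :: "'a set \<Rightarrow> ('a \<Rightarrow> 'a \<Rightarrow> bool) \<Rightarrow> bool" where
  "cyclically_separable V E \<longleftrightarrow> (\<exists>S. cyclic_vertex_cutset V E S)"

end

theory Submission
  imports Defs
begin

lemma pgroup_elem:
  fixes G (structure)
  assumes G: "group G" and P: "subgroup P G" and cP: "card P = p ^ a" and p: "Factorial_Ring.prime (p::nat)"
    and x: "x \<in> P"
  shows "\<exists>k. group.ord G x = p ^ k"
proof -
  interpret group G by (rule G)
  have g: "group (G\<lparr>carrier := P\<rparr>)" using P G by (rule subgroup.subgroup_is_group)
  have xc: "x \<in> carrier G" using P x subgroup.subset by blast
  have "x [^]\<^bsub>G\<lparr>carrier := P\<rparr>\<^esub> order (G\<lparr>carrier := P\<rparr>) = \<one>\<^bsub>G\<lparr>carrier := P\<rparr>\<^esub>"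
    using group.pow_order_eq_1[OF g, of x] x by simp
  then have "x [^] card P = \<one>" by (simp add: order_def flip: nat_pow_consistent)
  then have "ord x dvd p ^ a" using pow_eq_id[OF xc] cP by simp
  then obtain m where "normalize (ord x) = p ^ m" using divides_primepow[OF p] by metis
  then show ?thesis by auto
qed

lemma normal_sylow_contains:
  fixes G (structure)
  assumes G: "group G" and fin: "finite (carrier G)" and N: "P \<lhd> G"
    and cP: "card P = p ^ multiplicity p (order G)" and p: "Factorial_Ring.prime (p::nat)"
    and x: "x \<in> carrier G" and ox: "group.ord G x = p ^ k"
  shows "x \<in> P"
proof -
  interpret group G by (rule G)
  interpret normal P G by (rule N)
  define F where "F = G Mod P"
  have gF: "group F" unfolding F_def by (rule factorgroup_is_group)
  have cF: "P #> x \<in> carrier F" using x unfolding F_def by (auto simp: carrier_FactGroup)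
  have "(P #> x) [^]\<^bsub>F\<^esub> ord x = P #> (x [^] ord x)"
    unfolding F_def using FactGroup_pow[OF x] by simp
  also have "\<dots> = \<one>\<^bsub>F\<^esub>" using x unfolding F_def
    by (simp add: coset_join2 subgroup_axioms)
  finally have "group.ord F (P #> x) dvd p ^ k" using group.pow_eq_id[OF gF cF] ox by simp
  then obtain j where "normalize (group.ord F (P #> x)) = p ^ j" using divides_primepow[OF p] by metis
  then have j: "group.ord F (P #> x) = p ^ j" by simp
  have lag: "card (rcosets P) * card P = order G" using lagrange[OF subgroup_axioms] .
  have oF: "order F = card (rcosets P)" unfolding F_def by (simp add: order_def FactGroup_def)
  have pos: "order G > 0" using fin by (simp add: order_gt_0_iff_finite)
  have pp: "p ^ multiplicity p (order G) > 0" using p by (simp add: prime_gt_0_nat)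
  have oFeq: "order F = order G div p ^ multiplicity p (order G)"
    using lag oF cP pp by (metis nonzero_mult_div_cancel_right less_not_refl2)
  have "group.ord F (P #> x) dvd order F" using group.ord_dvd_group_order[OF gF cF] .
  then have "p ^ j dvd order G div p ^ multiplicity p (order G)" using j oFeq by simp
  then have "j = 0"
  proof (rule contrapos_pp)
    assume "j \<noteq> 0"
    then have a: "p dvd p ^ j" by simp
    show "\<not> p ^ j dvd order G div p ^ multiplicity p (order G)"
    proof
      assume b: "p ^ j dvd order G div p ^ multiplicity p (order G)"
      have "p dvd order G div p ^ multiplicity p (order G)" by (rule dvd_trans[OF a b])
      then show False using multiplicity_decompose[where p=p and x="order G"] pos p not_prime_unit by blast
    qed
  qed
  then have "group.ord F (P #> x) = 1" using j by simp
  then have "P #> x = \<one>\<^bsub>F\<^esub>" using group.ord_eq_1[OF gF cF] by simp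
  then have "P #> x = P" unfolding F_def by simp
  then show ?thesis using coset_join1[OF _ x subgroup_axioms] by simp
qed

definition pel :: "('a, 'b) monoid_scheme \<Rightarrow> nat \<Rightarrow> 'a set" where
  "pel G p = {x \<in> carrier G. x \<noteq> \<one>\<^bsub>G\<^esub> \<and> (\<exists>k. group.ord G x = p ^ k)}"

lemma same_prime:
  assumes "Factorial_Ring.prime (p::nat)" "Factorial_Ring.prime q" "k > 0" "p ^ k dvd q ^ j"
  shows "p = q"
proof -
  have "p dvd p ^ k" using assms(3) by (simp add: dvd_power)
  then have "p dvd q ^ j" using assms(4) dvd_trans by blast
  then have "p dvd q" using assms(1) prime_dvd_power by blast
  then show ?thesis using assms(1,2) primes_dvd_imp_eq by blast
qed

locale eppo = group G for G (structure) +
  assumes fin: "finite (carrier G)"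
    and ep: "\<forall>x\<in>carrier G. \<exists>p k. Factorial_Ring.prime (p::nat) \<and> ord x = p ^ k"
begin

abbreviation "E \<equiv> order_supergraph_adj G"

lemma nontriv:
  assumes "x \<in> carrier G" "x \<noteq> \<one>"
  obtains p k where "Factorial_Ring.prime p" "k > 0" "ord x = p ^ k" "x \<in> pel G p"
proof -
  obtain p k where pk: "Factorial_Ring.prime p" "ord x = p ^ k" using ep assms(1) by blast
  have "k \<noteq> 0" using pk(2) ord_eq_1[OF assms(1)] assms(2) by auto
  then show ?thesis using that pk assms by (auto simp: pel_def)
qed

lemma pel_ord:
  assumes "Factorial_Ring.prime p" "x \<in> pel G p"
  obtains k where "k > 0" "ord x = p ^ k"
proof -
  obtain k where k: "ord x = p ^ k" using assms(2) by (auto simp: pel_def)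
  have x: "x \<in> carrier G" "x \<noteq> \<one>" using assms(2) by (auto simp: pel_def)
  have "k \<noteq> 0" using k ord_eq_1[OF x(1)] x(2) by (cases k) auto
  then show ?thesis using that k by auto
qed

lemma pel_disj:
  assumes "Factorial_Ring.prime p" "Factorial_Ring.prime q" "p \<noteq> q"
  shows "pel G p \<inter> pel G q = {}"
proof (rule ccontr)
  assume "pel G p \<inter> pel G q \<noteq> {}"
  then obtain x where x: "x \<in> pel G p" "x \<in> pel G q" by blast
  obtain k where k: "k > 0" "ord x = p ^ k" using pel_ord[OF assms(1) x(1)] by blast
  obtain j where j: "j > 0" "ord x = q ^ j" using pel_ord[OF assms(2) x(2)] by blast
  have "p = q" using same_prime[OF assms(1,2) k(1), of j] k j by simp
  with assms show False by simp
qed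

lemma adj_pel:
  assumes p: "Factorial_Ring.prime p" and x: "x \<in> pel G p" and y: "y \<in> carrier G" "y \<noteq> \<one>"
    and e: "E x y"
  shows "y \<in> pel G p"
proof -
  obtain k where k: "k > 0" "ord x = p ^ k" using pel_ord[OF p x] by blast
  obtain q j where q: "Factorial_Ring.prime q" "j > 0" "ord y = q ^ j" "y \<in> pel G q"
    using nontriv[OF y] by blast
  have "p ^ k dvd q ^ j \<or> q ^ j dvd p ^ k" using e k q by (auto simp: order_supergraph_adj_def)
  then have "p = q" using same_prime[OF p q(1) k(1)] same_prime[OF q(1) p q(2)] by auto
  then show ?thesis using q by simp
qed

lemma pel_adj:
  assumes "x \<in> pel G p" "y \<in> pel G p" "x \<noteq> y"
  shows "E x y"
proof -
  obtain k j where "ord x = p ^ k" "ord y = p ^ j" using assms by (auto simp: pel_def)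
  moreover have "p ^ k dvd p ^ j \<or> p ^ j dvd p ^ k"
    by (cases "k \<le> j") (auto simp: le_imp_power_dvd)
  ultimately show ?thesis using assms by (auto simp: order_supergraph_adj_def pel_def)
qed

lemma comp_pel:
  assumes W: "W \<subseteq> carrier G" "\<one> \<notin> W" and p: "Factorial_Ring.prime p"
    and u: "u \<in> W" "u \<in> pel G p"
  shows "{v. (induced_adj W E)\<^sup>*\<^sup>* u v} = pel G p \<inter> W"
proof
  show "{v. (induced_adj W E)\<^sup>*\<^sup>* u v} \<subseteq> pel G p \<inter> W"
  proof
    fix v assume "v \<in> {v. (induced_adj W E)\<^sup>*\<^sup>* u v}"
    then have "(induced_adj W E)\<^sup>*\<^sup>* u v" by simp
    then show "v \<in> pel G p \<inter> W"
    proof (induction rule: rtranclp_induct)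
      case base then show ?case using u by simp
    next
      case (step y z)
      then have "z \<in> W" "E y z" by (auto simp: induced_adj_def)
      then show ?case using adj_pel[OF p _ _ _ \<open>E y z\<close>] step W by auto
    qed
  qed
next
  show "pel G p \<inter> W \<subseteq> {v. (induced_adj W E)\<^sup>*\<^sup>* u v}"
  proof
    fix v assume v: "v \<in> pel G p \<inter> W"
    show "v \<in> {v. (induced_adj W E)\<^sup>*\<^sup>* u v}"
    proof (cases "u = v")
      case True then show ?thesis by simp
    next
      case False
      then have "induced_adj W E u v" using pel_adj u v by (auto simp: induced_adj_def)
      then show ?thesis by auto
    qed
  qed
qed

lemma comp_one:
  assumes W: "W \<subseteq> carrier G" "\<one> \<in> W" and u: "u \<in> W"
  shows "{v. (induced_adj W E)\<^sup>*\<^sup>* u v} = W"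
proof
  show "{v. (induced_adj W E)\<^sup>*\<^sup>* u v} \<subseteq> W"
  proof
    fix v assume "v \<in> {v. (induced_adj W E)\<^sup>*\<^sup>* u v}"
    then have "(induced_adj W E)\<^sup>*\<^sup>* u v" by simp
    then show "v \<in> W"
      by (induction rule: rtranclp_induct) (auto simp: u induced_adj_def)
  qed
next
  have a: "induced_adj W E x \<one>" "induced_adj W E \<one> x" if "x \<in> W" "x \<noteq> \<one>" for x
    using that W by (auto simp: induced_adj_def order_supergraph_adj_def)
  have u1: "(induced_adj W E)\<^sup>*\<^sup>* u \<one>"
    using a(1)[OF u] by (cases "u = \<one>") auto
  show "W \<subseteq> {v. (induced_adj W E)\<^sup>*\<^sup>* u v}"
  proof
    fix v assume v: "v \<in> W"
    have "(induced_adj W E)\<^sup>*\<^sup>* \<one> v" using a(2)[OF v] by (cases "v = \<one>") auto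
    then show "v \<in> {v. (induced_adj W E)\<^sup>*\<^sup>* u v}" using u1 by simp
  qed
qed

lemma cycle_card:
  assumes "has_cycle_in C F" "finite C"
  shows "card C \<ge> 3"
proof -
  obtain xs where xs: "length xs \<ge> 3" "distinct xs" "set xs \<subseteq> C"
    using assms(1) by (auto simp: has_cycle_in_def)
  have "card (set xs) = length xs" using xs(2) by (simp add: distinct_card)
  then show ?thesis using card_mono[OF assms(2) xs(3)] xs(1) by simp
qed

lemma card_cycle:
  assumes "card C \<ge> 3" and adj: "\<And>x y. x \<in> C \<Longrightarrow> y \<in> C \<Longrightarrow> x \<noteq> y \<Longrightarrow> F x y"
  shows "has_cycle_in C F"
proof -
  obtain D where D: "D \<subseteq> C" "card D = 3"
    using assms(1) obtain_subset_with_card_n by metis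
  then obtain a b c where abc: "D = {a, b, c}" "a \<noteq> b" "a \<noteq> c" "b \<noteq> c"
    by (auto simp: card_3_iff)
  have "\<forall>i < length [a,b,c]. F ([a,b,c] ! i) ([a,b,c] ! ((i + 1) mod length [a,b,c]))"
    using adj abc D by (auto simp: less_Suc_eq)
  then show ?thesis unfolding has_cycle_in_def using abc D
    by (intro exI[of _ "[a,b,c]"]) auto
qed

lemma pel_fin: "finite (pel G p)"
  using fin by (auto simp: pel_def)

theorem graph_char:
  "cyclically_separable (carrier G) E \<longleftrightarrow>
    (\<exists>p q. Factorial_Ring.prime p \<and> Factorial_Ring.prime q \<and> p \<noteq> q \<and>
       3 \<le> card (pel G p) \<and> 3 \<le> card (pel G q))"
proof
  assume "cyclically_separable (carrier G) E"
  then obtain S C1 C2 where S: "S \<subseteq> carrier G"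
    and c1: "is_component (carrier G - S) E C1" and c2: "is_component (carrier G - S) E C2"
    and ne: "C1 \<noteq> C2" and h1: "has_cycle_in C1 E" and h2: "has_cycle_in C2 E"
    by (auto simp: cyclically_separable_def cyclic_vertex_cutset_def vertex_cutset_def)
  define W where "W = carrier G - S"
  obtain u1 where u1: "u1 \<in> W" "C1 = {v. (induced_adj W E)\<^sup>*\<^sup>* u1 v}"
    using c1 by (auto simp: is_component_def W_def)
  obtain u2 where u2: "u2 \<in> W" "C2 = {v. (induced_adj W E)\<^sup>*\<^sup>* u2 v}"
    using c2 by (auto simp: is_component_def W_def)
  have Wc: "W \<subseteq> carrier G" by (auto simp: W_def)
  have one: "\<one> \<notin> W"
  proof
    assume "\<one> \<in> W"
    then have "C1 = W" "C2 = W" using comp_one[OF Wc] u1 u2 by auto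
    then show False using ne by simp
  qed
  obtain p k where p: "Factorial_Ring.prime p" "u1 \<in> pel G p"
    using nontriv[of u1] u1 Wc one by blast
  obtain q j where q: "Factorial_Ring.prime q" "u2 \<in> pel G q"
    using nontriv[of u2] u2 Wc one by blast
  have C1: "C1 = pel G p \<inter> W" using comp_pel[OF Wc one p(1) u1(1) p(2)] u1 by simp
  have C2: "C2 = pel G q \<inter> W" using comp_pel[OF Wc one q(1) u2(1) q(2)] u2 by simp
  have "3 \<le> card C1" using cycle_card[OF h1] C1 pel_fin by simp
  moreover have "card (pel G p \<inter> W) \<le> card (pel G p)" by (rule card_mono[OF pel_fin]) auto
  ultimately have 1: "3 \<le> card (pel G p)" using C1 by simp
  have "3 \<le> card C2" using cycle_card[OF h2] C2 pel_fin by simp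
  moreover have "card (pel G q \<inter> W) \<le> card (pel G q)" by (rule card_mono[OF pel_fin]) auto
  ultimately have 2: "3 \<le> card (pel G q)" using C2 by simp
  have "p \<noteq> q" using ne C1 C2 by auto
  then show "\<exists>p q. Factorial_Ring.prime p \<and> Factorial_Ring.prime q \<and> p \<noteq> q \<and>
       3 \<le> card (pel G p) \<and> 3 \<le> card (pel G q)" using p q 1 2 by blast
next
  assume "\<exists>p q. Factorial_Ring.prime p \<and> Factorial_Ring.prime q \<and> p \<noteq> q \<and>
       3 \<le> card (pel G p) \<and> 3 \<le> card (pel G q)"
  then obtain p q where pq: "Factorial_Ring.prime p" "Factorial_Ring.prime q" "p \<noteq> q"
    "3 \<le> card (pel G p)" "3 \<le> card (pel G q)" by blast
  define W where "W = carrier G - {\<one>}"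
  have Wc: "W \<subseteq> carrier G" and one: "\<one> \<notin> W" by (auto simp: W_def)
  obtain u1 where u1: "u1 \<in> pel G p" using pq(4) by fastforce
  obtain u2 where u2: "u2 \<in> pel G q" using pq(5) by fastforce
  have pW: "pel G r \<inter> W = pel G r" for r by (auto simp: W_def pel_def)
  have u1W: "u1 \<in> W" using u1 pW by blast
  have u2W: "u2 \<in> W" using u2 pW by blast
  have C1: "{v. (induced_adj W E)\<^sup>*\<^sup>* u1 v} = pel G p"
    using comp_pel[OF Wc one pq(1) u1W u1] pW by simp
  have C2: "{v. (induced_adj W E)\<^sup>*\<^sup>* u2 v} = pel G q"
    using comp_pel[OF Wc one pq(2) u2W u2] pW by simp
  have i1: "is_component W E (pel G p)" unfolding is_component_def using u1W C1 by blast
  have i2: "is_component W E (pel G q)" unfolding is_component_def using u2W C2 by blast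
  have ne: "pel G p \<noteq> pel G q" using pel_disj[OF pq(1-3)] u1 by blast
  have h1: "has_cycle_in (pel G p) E" using card_cycle[OF pq(4)] pel_adj by blast
  have h2: "has_cycle_in (pel G q) E" using card_cycle[OF pq(5)] pel_adj by blast
  show "cyclically_separable (carrier G) E"
    unfolding cyclically_separable_def cyclic_vertex_cutset_def vertex_cutset_def
    using i1 i2 ne h1 h2 W_def by (intro exI[of _ "{\<one>}"]) auto
qed


lemma pgroup_dvd:
  assumes x: "x \<in> P" and P: "subgroup P G"
  shows "ord x dvd card P"
proof -
  have g: "group (G\<lparr>carrier := P\<rparr>)" using P is_group by (rule subgroup.subgroup_is_group)
  have xc: "x \<in> carrier G" using P x subgroup.subset by blast
  have "x [^]\<^bsub>G\<lparr>carrier := P\<rparr>\<^esub> order (G\<lparr>carrier := P\<rparr>) = \<one>\<^bsub>G\<lparr>carrier := P\<rparr>\<^esub>"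
    using group.pow_order_eq_1[OF g, of x] x by simp
  then have "x [^] card P = \<one>" by (simp add: order_def flip: nat_pow_consistent)
  then show ?thesis using pow_eq_id[OF xc] by simp
qed

lemma conj_pow:
  assumes "g \<in> carrier G" "h \<in> carrier G"
  shows "(g \<otimes> h \<otimes> inv g) [^] (n::nat) = g \<otimes> h [^] n \<otimes> inv g"
proof (induction n)
  case 0 then show ?case using assms by simp
next
  case (Suc n)
  have ig: "inv g \<otimes> (g \<otimes> y) = y" if "y \<in> carrier G" for y
    using assms that by (simp add: m_assoc[symmetric])
  have "(g \<otimes> h \<otimes> inv g) [^] Suc n = g \<otimes> h [^] n \<otimes> inv g \<otimes> (g \<otimes> h \<otimes> inv g)"
    using Suc by simp
  also have "\<dots> = g \<otimes> h [^] n \<otimes> h \<otimes> inv g"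
    using assms by (simp add: m_assoc ig)
  also have "\<dots> = g \<otimes> h [^] Suc n \<otimes> inv g"
    using assms by (simp add: m_assoc)
  finally show ?case .
qed

lemma conj_ord:
  assumes "g \<in> carrier G" "h \<in> carrier G"
  shows "ord (g \<otimes> h \<otimes> inv g) = ord h"
proof -
  have "(g \<otimes> h \<otimes> inv g) [^] n = \<one> \<longleftrightarrow> h [^] n = \<one>" for n :: nat
  proof -
    have "(g \<otimes> h \<otimes> inv g) [^] n = \<one> \<longleftrightarrow> g \<otimes> h [^] n \<otimes> inv g = \<one>"
      using conj_pow[OF assms] by simp
    also have "\<dots> \<longleftrightarrow> g \<otimes> h [^] n = g"
      using assms by (metis inv_solve_right' l_one m_closed nat_pow_closed one_closed)
    also have "\<dots> \<longleftrightarrow> h [^] n = \<one>"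
      using assms by (metis l_cancel_one' nat_pow_closed)
    finally show ?thesis .
  qed
  then show ?thesis using assms
    by (metis m_closed inv_closed ord_unique pow_eq_id)
qed

lemma ord_two:
  assumes "x \<in> carrier G" "x \<otimes> x = \<one>" "x \<noteq> \<one>"
  shows "ord x = 2"
proof -
  have "x [^] (2::nat) = \<one>" using assms by (simp add: numeral_2_eq_2)
  then have d: "ord x dvd 2" using pow_eq_id assms(1) by blast
  have "ord x \<noteq> 1" using ord_eq_1 assms by simp
  moreover have "ord x \<noteq> 0" using d by (cases "ord x") auto
  moreover have "ord x \<le> 2" using d by (simp add: dvd_imp_le)
  ultimately show ?thesis by linarith
qed

lemma exists_sylow:
  assumes p: "Factorial_Ring.prime (p::nat)"
  shows "\<exists>P. sylow_subgroup G p P"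
proof -
  have "order G = p ^ multiplicity p (order G) * (order G div p ^ multiplicity p (order G))"
    using multiplicity_dvd[of p "order G"] by simp
  then show ?thesis using sylow_thm[OF p is_group _ fin] unfolding sylow_subgroup_def by blast
qed

lemma sylow_pel:
  assumes p: "Factorial_Ring.prime (p::nat)" and P: "sylow_subgroup G p P"
  shows "P - {\<one>} \<subseteq> pel G p"
proof
  fix x assume x: "x \<in> P - {\<one>}"
  have sg: "subgroup P G" using P by (simp add: sylow_subgroup_def)
  have "\<exists>k. ord x = p ^ k"
    using pgroup_elem[OF is_group sg _ p] x P by (auto simp: sylow_subgroup_def)
  then show "x \<in> pel G p" using x subgroup.subset[OF sg] by (auto simp: pel_def)
qed

lemma sylow_card_sub:
  assumes P: "sylow_subgroup G p P"
  shows "card (P - {\<one>}) = card P - 1" "finite P"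
proof -
  have sg: "subgroup P G" using P by (simp add: sylow_subgroup_def)
  show "finite P" using fin subgroup.subset[OF sg] finite_subset by blast
  then show "card (P - {\<one>}) = card P - 1" using subgroup.one_closed[OF sg] by simp
qed

lemma sylow_exp:
  assumes p: "Factorial_Ring.prime (p::nat)" and d: "p dvd order G" and P: "sylow_subgroup G p P"
  obtains a where "a \<ge> 1" "card P = p ^ a"
proof -
  have "order G \<noteq> 0" using fin by (simp add: order_gt_0_iff_finite[symmetric])
  then have "multiplicity p (order G) > 0"
    using multiplicity_gt_zero_iff[where p=p and x="order G"] d p not_prime_unit by blast
  then have "multiplicity p (order G) \<ge> 1" by simp
  then show ?thesis using that P by (auto simp: sylow_subgroup_def)
qed

lemma pel_dvd:
  assumes p: "Factorial_Ring.prime p" and x: "x \<in> pel G p"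
  shows "p dvd order G"
proof -
  obtain k where k: "k > 0" "ord x = p ^ k" using pel_ord[OF p x] by blast
  have "p dvd ord x" using k by simp
  moreover have "ord x dvd order G" using x ord_dvd_group_order by (auto simp: pel_def)
  ultimately show ?thesis by (rule dvd_trans)
qed

lemma big_sylow:
  assumes p: "Factorial_Ring.prime (p::nat)" and d: "p dvd order G" and P: "sylow_subgroup G p P"
    and c: "card P \<ge> 4"
  shows "3 \<le> card (pel G p)"
proof -
  have "card (P - {\<one>}) \<le> card (pel G p)"
    using card_mono[OF pel_fin sylow_pel[OF p P]] .
  then show ?thesis using sylow_card_sub[OF P] c by simp
qed

lemma count_char:
  assumes p: "Factorial_Ring.prime (p::nat)"
  shows "3 \<le> card (pel G p) \<longleftrightarrow>
    (5 \<le> p \<and> p dvd order G) \<or>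
    ((p = 3 \<or> p = 2) \<and> p dvd order G \<and> (\<exists>P. sylow_subgroup G p P \<and> (card P \<noteq> p \<or> \<not> P \<lhd> G)))"
proof
  assume c: "3 \<le> card (pel G p)"
  then obtain x where x: "x \<in> pel G p" by fastforce
  have d: "p dvd order G" using pel_dvd[OF p x] .
  show "(5 \<le> p \<and> p dvd order G) \<or>
    ((p = 3 \<or> p = 2) \<and> p dvd order G \<and> (\<exists>P. sylow_subgroup G p P \<and> (card P \<noteq> p \<or> \<not> P \<lhd> G)))"
  proof (cases "5 \<le> p")
    case True then show ?thesis using d by simp
  next
    case False
    have "p \<ge> 2" using p prime_ge_2_nat by blast
    moreover have "p \<noteq> 4" using p by auto
    ultimately have p23: "p = 3 \<or> p = 2" using False by linarith
    show ?thesis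
    proof (rule ccontr)
      assume "\<not> ?thesis"
      then have all: "\<And>P. sylow_subgroup G p P \<Longrightarrow> card P = p \<and> P \<lhd> G" using p23 d False by auto
      obtain P where P: "sylow_subgroup G p P" using exists_sylow[OF p] by blast
      have cp: "card P = p" "P \<lhd> G" using all[OF P] by auto
      have "pel G p \<subseteq> P - {\<one>}"
      proof
        fix y assume y: "y \<in> pel G p"
        then obtain k where "ord y = p ^ k" by (auto simp: pel_def)
        then have "y \<in> P" using normal_sylow_contains[OF is_group fin cp(2) _ p, of y k] y P
          by (auto simp: pel_def sylow_subgroup_def)
        then show "y \<in> P - {\<one>}" using y by (auto simp: pel_def)
      qed
      then have "card (pel G p) \<le> card (P - {\<one>})"
        using card_mono sylow_card_sub(2)[OF P] by (metis finite_Diff)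
      then show False using c sylow_card_sub(1)[OF P] cp p23 by auto
    qed
  qed
next
  assume "(5 \<le> p \<and> p dvd order G) \<or>
    ((p = 3 \<or> p = 2) \<and> p dvd order G \<and> (\<exists>P. sylow_subgroup G p P \<and> (card P \<noteq> p \<or> \<not> P \<lhd> G)))"
  then consider (big) "5 \<le> p" "p dvd order G"
    | (small) P where "p = 3 \<or> p = 2" "p dvd order G" "sylow_subgroup G p P" "card P \<noteq> p \<or> \<not> P \<lhd> G"
    by blast
  then show "3 \<le> card (pel G p)"
  proof cases
    case big
    obtain P where P: "sylow_subgroup G p P" using exists_sylow[OF p] by blast
    obtain a where a: "a \<ge> 1" "card P = p ^ a" using sylow_exp[OF p big(2) P] by blast
    have "p \<le> p ^ a" using power_increasing[of 1 a p] a(1) prime_ge_1_nat[OF p] by simp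
    then show ?thesis using big_sylow[OF p big(2) P] a big(1) by simp
  next
    case small
    note P = small(3)
    obtain a where a: "a \<ge> 1" "card P = p ^ a" using sylow_exp[OF p small(2) P] by blast
    show ?thesis
    proof (cases "card P = p")
      case False
      then have "a \<ge> 2" using a by (cases a) auto
      then have "p ^ 2 \<le> p ^ a" using power_increasing[of 2 a p] prime_ge_1_nat[OF p] by simp
      moreover have "4 \<le> p ^ 2" using small(1) by auto
      ultimately show ?thesis using big_sylow[OF p small(2) P] a by simp
    next
      case True
      then have nn: "\<not> P \<lhd> G" using small by simp
      have sg: "subgroup P G" using P by (simp add: sylow_subgroup_def)
      obtain g h where gh: "g \<in> carrier G" "h \<in> P" "g \<otimes> h \<otimes> inv g \<notin> P"
        using nn sg normal_inv_iff by blast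
      have hc: "h \<in> carrier G" using gh subgroup.subset[OF sg] by blast
      define b where "b = g \<otimes> h \<otimes> inv g"
      have bc: "b \<in> carrier G" using gh hc by (simp add: b_def)
      have h1: "h \<noteq> \<one>" using gh by auto
      have b1: "b \<noteq> \<one>" using gh subgroup.one_closed[OF sg] by (auto simp: b_def)
      have ob: "ord b = ord h" using conj_ord[OF gh(1) hc] by (simp add: b_def)
      have hp: "h \<in> pel G p" using sylow_pel[OF p P] gh h1 by blast
      have bp: "b \<in> pel G p" using hp ob bc b1 by (auto simp: pel_def)
      have bP: "b \<notin> P" using gh by (simp add: b_def)
      have sub1: "insert b (P - {\<one>}) \<subseteq> pel G p" using sylow_pel[OF p P] bp by blast
      have cs: "card (insert b (P - {\<one>})) = card P" using sylow_card_sub[OF P] bP True p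
        by (simp add: prime_gt_0_nat)
      show ?thesis
      proof (cases "p = 3")
        case True
        then show ?thesis using card_mono[OF pel_fin sub1] cs \<open>card P = p\<close> by simp
      next
        case False
        then have p2: "p = 2" using small by simp
        have "ord h dvd 2" using pgroup_dvd[OF gh(2) sg] True p2 by simp
        then have "ord h = 2"
          using ord_eq_1[OF hc] h1 by (metis dvd_antisym dvd_refl nat_dvd_1_iff_1 two_is_prime_nat prime_nat_iff)
        then have hh: "h \<otimes> h = \<one>" using pow_ord_eq_1[OF hc] using hc by (simp add: numeral_2_eq_2)
        have ih: "inv h = h" using inv_equality[OF hh hc hc] .
        have bh: "b \<noteq> h" using bP gh by auto
        have "\<exists>c. c \<in> pel G p \<and> c \<noteq> h \<and> c \<noteq> b"
        proof (cases "h \<otimes> b \<otimes> h = b")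
          case False
          define c where "c = h \<otimes> b \<otimes> inv h"
          have cc: "c \<in> carrier G" using hc bc by (simp add: c_def)
          have oc: "ord c = ord b" using conj_ord[OF hc bc] by (simp add: c_def)
          have c1: "c \<noteq> \<one>" using oc ob ord_eq_1 cc hc h1 by metis
          have ch: "c \<noteq> h"
          proof
            assume "c = h"
            then have "h \<otimes> b \<otimes> h = h \<otimes> \<one>" using ih hc by (simp add: c_def)
            then have "h \<otimes> b = \<one>" using hc bc by (metis m_closed r_one r_cancel_one' m_assoc one_closed l_cancel)
            then have "b = inv h" using hc bc inv_equality by (metis inv_unique' r_inv)
            then show False using ih bh by simp
          qed
          have "c \<noteq> b" using False ih by (simp add: c_def)
          moreover have "c \<in> pel G p" using cc c1 oc bp by (auto simp: pel_def)
          ultimately show ?thesis using ch by blast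
        next
          case True
          define c where "c = h \<otimes> b"
          have cc: "c \<in> carrier G" using hc bc by (simp add: c_def)
          have "c \<otimes> c = (h \<otimes> b \<otimes> h) \<otimes> b" using hc bc by (simp add: c_def m_assoc)
          also have "\<dots> = \<one>" using True ob \<open>ord h = 2\<close> pow_ord_eq_1[OF bc] using bc by (simp add: numeral_2_eq_2)
          finally have cc2: "c \<otimes> c = \<one>" .
          have c1: "c \<noteq> \<one>"
          proof
            assume "c = \<one>"
            then have "b = inv h" using hc bc inv_equality by (metis c_def inv_unique' r_inv)
            then show False using ih bh by simp
          qed
          have "ord c = 2" using ord_two[OF cc cc2 c1] .
          then have "c \<in> pel G p" using cc c1 p2 by (auto simp: pel_def intro: exI[of _ 1])
          moreover have "c \<noteq> h" using hc bc b1 by (simp add: c_def)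
          moreover have "c \<noteq> b" using hc bc h1 by (simp add: c_def)
          ultimately show ?thesis by blast
        qed
        then obtain c where c: "c \<in> pel G p" "c \<noteq> h" "c \<noteq> b" by blast
        have "{h, b, c} \<subseteq> pel G p" using c hp bp by blast
        moreover have "card {h, b, c} = 3" using c bh by auto
        ultimately show ?thesis using card_mono[OF pel_fin] by metis
      qed
    qed
  qed
qed

end

lemma pq_dvd:
  assumes "Factorial_Ring.prime (p::nat)" "Factorial_Ring.prime q" "p \<noteq> q" "p dvd n" "q dvd n"
  shows "p * q dvd n"
  using assms by (simp add: divides_mult primes_coprime)

theorem mainTheorem3:
  fixes G :: "('a, 'b) monoid_scheme"
  assumes "EPPO G"
  defines "c1 \<equiv> (\<exists>p::nat. Factorial_Ring.prime p \<and> p \<ge> 5 \<and> p dvd order G)"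
      and "c2 \<equiv> (3 dvd order G \<and>
                 (\<exists>P. sylow_subgroup G 3 P \<and> (card P \<noteq> 3 \<or> \<not> P \<lhd> G)))"
      and "c3 \<equiv> (2 dvd order G \<and>
                 (\<exists>P. sylow_subgroup G 2 P \<and> (card P \<noteq> 2 \<or> \<not> P \<lhd> G)))"
  shows "cyclically_separable (carrier G) (order_supergraph_adj G) \<longleftrightarrow>
           ((\<exists>p q::nat. Factorial_Ring.prime p \<and> Factorial_Ring.prime q \<and> p > q \<and> q \<ge> 5 \<and> p * q dvd order G) \<or>
            (c1 \<and> c2) \<or> (c1 \<and> c3) \<or> (c2 \<and> c3))"
proof -
  interpret eppo G using assms(1) unfolding EPPO_def eppo_def eppo_axioms_def by blast
  define Q where "Q p \<longleftrightarrow> (5 \<le> p \<and> p dvd order G) \<or>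
    ((p = 3 \<or> p = 2) \<and> p dvd order G \<and> (\<exists>P. sylow_subgroup G p P \<and> (card P \<noteq> p \<or> \<not> P \<lhd> G)))"
    for p :: nat
  have Q3: "Q 3 = c2" by (simp add: Q_def c2_def)
  have Q2: "Q 2 = c3" by (simp add: Q_def c3_def)
  have Qs: "Q p \<Longrightarrow> 5 \<le> p \<or> p = 3 \<or> p = 2" for p by (auto simp: Q_def)
  have Q5: "5 \<le> p \<Longrightarrow> Q p = (p dvd order G)" for p by (auto simp: Q_def)
  have p3: "Factorial_Ring.prime (3::nat)" and p2: "Factorial_Ring.prime (2::nat)" by simp_all
  have "cyclically_separable (carrier G) (order_supergraph_adj G) \<longleftrightarrow>
    (\<exists>p q. Factorial_Ring.prime p \<and> Factorial_Ring.prime q \<and> p \<noteq> q \<and> Q p \<and> Q q)"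
    unfolding graph_char using count_char unfolding Q_def by blast
  also have "\<dots> \<longleftrightarrow> ((\<exists>p q::nat. Factorial_Ring.prime p \<and> Factorial_Ring.prime q \<and> p > q \<and> q \<ge> 5 \<and> p * q dvd order G) \<or>
            (c1 \<and> c2) \<or> (c1 \<and> c3) \<or> (c2 \<and> c3))" (is "?L \<longleftrightarrow> ?R")
  proof
    assume ?L
    then obtain p q where pq: "Factorial_Ring.prime p" "Factorial_Ring.prime q" "p \<noteq> q" "Q p" "Q q"
      by blast
    have sym: "?R" if a: "Factorial_Ring.prime p'" "Factorial_Ring.prime q'" "p' \<noteq> q'" "Q p'" "Q q'"
      "p' > q'" for p' q'
    proof -
      consider "5 \<le> q'" | "q' = 3" | "q' = 2" using Qs[OF a(5)] by blast
      then show ?thesis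
      proof cases
        case 1
        then have "p' dvd order G" "q' dvd order G" using Q5 a by auto
        then show ?thesis using pq_dvd[OF a(1-3)] 1 a by blast
      next
        case 2
        then have "5 \<le> p'" using Qs[OF a(4)] a by auto
        then have c1 using Q5 a unfolding c1_def by blast
        then show ?thesis using 2 Q3 a by simp
      next
        case 3
        then consider "5 \<le> p'" | "p' = 3" using Qs[OF a(4)] a by auto
        then show ?thesis
        proof cases
          case 1
          then have c1 using Q5 a unfolding c1_def by blast
          then show ?thesis using 3 Q2 a by simp
        next
          case 2
          then show ?thesis using 3 Q2 Q3 a by simp
        qed
      qed
    qed
    show ?R
    proof (cases "p > q")
      case True then show ?thesis using sym[OF pq] by blast
    next
      case False then show ?thesis using sym[of q p] pq by simp
    qed
  next
    assume ?R
    then consider (a) p q where "Factorial_Ring.prime p" "Factorial_Ring.prime q" "p > q" "q \<ge> 5" "p * q dvd order G"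
      | (b) "c1" "c2" | (c) "c1" "c3" | (d) "c2" "c3" by blast
    then show ?L
    proof cases
      case a
      then have "Q p" "Q q" using Q5 by (auto intro: dvd_mult_left dvd_mult_right)
      then show ?thesis using a by (intro exI[of _ p] exI[of _ q]) auto
    next
      case b
      then obtain p where "Factorial_Ring.prime p" "p \<ge> 5" "p dvd order G" unfolding c1_def by blast
      then show ?thesis using b Q3 Q5 p3 by (intro exI[of _ p] exI[of _ 3]) auto
    next
      case c
      then obtain p where "Factorial_Ring.prime p" "p \<ge> 5" "p dvd order G" unfolding c1_def by blast
      then show ?thesis using c Q2 Q5 p2 by (intro exI[of _ p] exI[of _ 2]) auto
    next
      case d
      then show ?thesis using Q2 Q3 p2 p3 by (intro exI[of _ 3] exI[of _ 2]) auto
    qed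
  qed
  finally show ?thesis .
qed

end
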